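(* In the multi-agent combinatorial-actions contract model (described in the context) with a subadditive reward function $f$, the optimal single-agent contract is an $O(n)$-approximation of the optimal unconstrained contract: there exist a contract $\boldsymbol{\alpha}$ with $\alpha_i=0$ for all but at most one agent $i$, and a pure Nash equilibrium $S$ of $\boldsymbol{\alpha}$, such that $$\Big(1-\sum_i\alpha_i\Big)f(S)\ \ge\ \Omega\!\left(\frac1n\right)\max_{\boldsymbol{\alpha}^\star,\,S^\star\in\mathsf{NE}(\boldsymbol{\alpha}^\star)}\Big(1-\sum_i\alpha^\star_i\Big)f(S^\star).$$
   Context: Model: principal and agents $A=[n]$; each agent $i$ has a finite action set $T_i$ (pairwise disjoint), $T=\bigsqcup_iT_i$, costs $c_j\ge0$, $c(S_i)=\sum_{j\in S_i}c_j$. Reward $f:2^T\to[0,1]$ monotone, $f(\emptyset)=0$; subadditive means $f(S)+f(S')\ge f(S\cup S')$. Contract $\boldsymbol{\alpha}\in[0,1]^A$; agent $i$'s utility $\alpha_if(S)-c(S\cap T_i)$; $S\in\mathsf{NE}(\boldsymbol{\alpha})$ (pure Nash equilibrium) if no agent can gain by changing her own subset of actions. Principal's utility $(1-\sum_i\alpha_i)f(S)$. The $\Omega(\cdot)$ hides a universal constant. *)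

theory Defs
  imports "HOL-Analysis.Analysis"
begin

text \<open>Agent i owns the finite
action set T i; these are pairwise disjoint.
A (joint) action profile is a subset S of the union of all T i.\<close>

definition all_actions :: "'a set \<Rightarrow> ('a \<Rightarrow> 'b set) \<Rightarrow> 'b set" where
  "all_actions Ag T = (\<Union>i\<in>Ag. T i)"

definition cost :: "('b \<Rightarrow> real) \<Rightarrow> 'b set \<Rightarrow> real" where
  "cost c X = (\<Sum>j\<in>X. c j)"

definition agent_util ::
  "('a \<Rightarrow> 'b set) \<Rightarrow> ('b \<Rightarrow> real) \<Rightarrow> ('b set \<Rightarrow> real) \<Rightarrow> ('a \<Rightarrow> real) \<Rightarrow> 'a \<Rightarrow> 'b set \<Rightarrow> real" where
  "agent_util T c f \<alpha> i S = \<alpha> i * f S - cost c (S \<inter> T i)"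

definition is_NE ::
  "'a set \<Rightarrow> ('a \<Rightarrow> 'b set) \<Rightarrow> ('b \<Rightarrow> real) \<Rightarrow> ('b set \<Rightarrow> real) \<Rightarrow> ('a \<Rightarrow> real) \<Rightarrow> 'b set \<Rightarrow> bool" where
  "is_NE Ag T c f \<alpha> S \<longleftrightarrow> S \<subseteq> all_actions Ag T \<and>
     (\<forall>i\<in>Ag. \<forall>S'\<subseteq>T i.
        agent_util T c f \<alpha> i ((S - T i) \<union> S') \<le> agent_util T c f \<alpha> i S)"

definition is_contract :: "'a set \<Rightarrow> ('a \<Rightarrow> real) \<Rightarrow> bool" where
  "is_contract Ag \<alpha> \<longleftrightarrow> (\<forall>i\<in>Ag. 0 \<le> \<alpha> i \<and> \<alpha> i \<le> 1) \<and> (\<forall>i. i \<notin> Ag \<longrightarrow> \<alpha> i = 0)"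

definition principal_util :: "'a set \<Rightarrow> ('b set \<Rightarrow> real) \<Rightarrow> ('a \<Rightarrow> real) \<Rightarrow> 'b set \<Rightarrow> real" where
  "principal_util Ag f \<alpha> S = (1 - (\<Sum>i\<in>Ag. \<alpha> i)) * f S"

definition valid_reward :: "'b set \<Rightarrow> ('b set \<Rightarrow> real) \<Rightarrow> bool" where
  "valid_reward U f \<longleftrightarrow> f {} = 0 \<and>
     (\<forall>S\<subseteq>U. 0 \<le> f S \<and> f S \<le> 1) \<and>
     (\<forall>S S'. S \<subseteq> S' \<and> S' \<subseteq> U \<longrightarrow> f S \<le> f S')"

definition subadditive_on :: "'b set \<Rightarrow> ('b set \<Rightarrow> real) \<Rightarrow> bool" where
  "subadditive_on U f \<longleftrightarrow> (\<forall>S S'. S \<subseteq> U \<and> S' \<subseteq> U \<longrightarrow> f (S \<union> S') \<le> f S + f S')"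

end

theory Submission
  imports Defs
begin

lemma ex_max: fixes g :: "'a \<Rightarrow> real"
  shows "finite B \<Longrightarrow> B \<noteq> {} \<Longrightarrow> \<exists>j\<in>B. \<forall>x\<in>B. g x \<le> g j"
proof (induction B rule: finite_ne_induct)
  case (singleton x) thus ?case by auto
next
  case (insert x F)
  then obtain j where "j \<in> F" "\<forall>y\<in>F. g y \<le> g j" by auto
  thus ?case by (cases "g x \<le> g j") auto
qed

locale setting =
  fixes Ag :: "nat set" and T :: "nat \<Rightarrow> nat set" and c :: "nat \<Rightarrow> real" and f :: "nat set \<Rightarrow> real"
  assumes fin: "finite Ag" and nonempty: "Ag \<noteq> {}" and finT: "\<forall>i\<in>Ag. finite (T i)"
  and disj: "\<forall>i\<in>Ag. \<forall>k\<in>Ag. i \<noteq> k \<longrightarrow> T i \<inter> T k = {}"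
  and cpos: "\<forall>j\<in>all_actions Ag T. 0 \<le> c j"
  and vr: "valid_reward (all_actions Ag T) f" and sa: "subadditive_on (all_actions Ag T) f"
begin

abbreviation "U \<equiv> all_actions Ag T"

lemma f0: "f {} = 0" using vr unfolding valid_reward_def by auto
lemma fnn: "X \<subseteq> U \<Longrightarrow> 0 \<le> f X" using vr unfolding valid_reward_def by auto
lemma fmono: "X \<subseteq> Y \<Longrightarrow> Y \<subseteq> U \<Longrightarrow> f X \<le> f Y" using vr unfolding valid_reward_def by auto
lemma fsub: "X \<subseteq> U \<Longrightarrow> Y \<subseteq> U \<Longrightarrow> f (X \<union> Y) \<le> f X + f Y"
  using sa unfolding subadditive_on_def by auto
lemma Tsub: "i \<in> Ag \<Longrightarrow> T i \<subseteq> U" unfolding all_actions_def by auto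
lemma cost_nn: "X \<subseteq> U \<Longrightarrow> 0 \<le> cost c X"
  unfolding cost_def using cpos by (meson subsetD sum_nonneg)

lemma fsub_UN: "finite B \<Longrightarrow> (\<forall>j\<in>B. X j \<subseteq> U) \<Longrightarrow> f (\<Union>j\<in>B. X j) \<le> (\<Sum>j\<in>B. f (X j))"
proof (induction B rule: finite_induct)
  case empty thus ?case by (simp add: f0)
next
  case (insert x F)
  have "f (\<Union>j\<in>insert x F. X j) = f (X x \<union> (\<Union>j\<in>F. X j))" by simp
  also have "\<dots> \<le> f (X x) + f (\<Union>j\<in>F. X j)" using insert.prems by (intro fsub) auto
  also have "\<dots> \<le> f (X x) + (\<Sum>j\<in>F. f (X j))" using insert by auto
  finally show ?case using insert by simp
qed

lemma exists_big: "finite B \<Longrightarrow> B \<noteq> {} \<Longrightarrow> \<exists>j\<in>B. sum v B \<le> real (card B) * v j"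
proof -
  assume a: "finite B" "B \<noteq> {}"
  obtain j where j: "j \<in> B" "\<forall>x\<in>B. v x \<le> v j"
    using ex_max[OF a] by blast
  have "sum v B \<le> (\<Sum>x\<in>B. v j)" using j by (intro sum_mono) auto
  thus ?thesis using j by auto
qed

definition BR :: "nat \<Rightarrow> real \<Rightarrow> nat set \<Rightarrow> bool" where
  "BR i \<beta> S \<longleftrightarrow> S \<subseteq> T i \<and> (\<forall>S'\<subseteq>T i. \<beta> * f S' - cost c S' \<le> \<beta> * f S - cost c S)"

lemma BR_ex: assumes "i \<in> Ag" shows "\<exists>S. BR i \<beta> S"
proof -
  have "finite (Pow (T i))" using finT assms by auto
  moreover have "Pow (T i) \<noteq> {}" by auto
  ultimately obtain S where "S \<in> Pow (T i)"
    "\<forall>S'\<in>Pow (T i). \<beta> * f S' - cost c S' \<le> \<beta> * f S - cost c S"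
    using ex_max[of "Pow (T i)" "\<lambda>S. \<beta> * f S - cost c S"] by blast
  thus ?thesis unfolding BR_def by auto
qed


definition single :: "nat \<Rightarrow> real \<Rightarrow> nat \<Rightarrow> real" where
  "single i \<beta> = (\<lambda>k. if k = i then \<beta> else 0)"

lemma single_ok:
  assumes i: "i \<in> Ag" and b: "0 \<le> \<beta>" "\<beta> \<le> 1" and br: "BR i \<beta> S"
  shows "is_contract Ag (single i \<beta>)" "card {k\<in>Ag. single i \<beta> k \<noteq> 0} \<le> 1"
    "is_NE Ag T c f (single i \<beta>) S" "principal_util Ag f (single i \<beta>) S = (1 - \<beta>) * f S"
proof -
  show "is_contract Ag (single i \<beta>)" using i b unfolding is_contract_def single_def by auto
  have "{k\<in>Ag. single i \<beta> k \<noteq> 0} \<subseteq> {i}" unfolding single_def by auto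
  then have "card {k\<in>Ag. single i \<beta> k \<noteq> 0} \<le> card {i}" by (intro card_mono) auto
  then show "card {k\<in>Ag. single i \<beta> k \<noteq> 0} \<le> 1" by simp
  have sum: "(\<Sum>k\<in>Ag. single i \<beta> k) = \<beta>" unfolding single_def using fin i by simp
  show "principal_util Ag f (single i \<beta>) S = (1 - \<beta>) * f S"
    unfolding principal_util_def sum ..
  have ST: "S \<subseteq> T i" using br unfolding BR_def by auto
  show "is_NE Ag T c f (single i \<beta>) S"
    unfolding is_NE_def
  proof (intro conjI ballI allI impI)
    show "S \<subseteq> U" using ST Tsub[OF i] by auto
  next
    fix k S' assume k: "k \<in> Ag" and S': "S' \<subseteq> T k"
    show "agent_util T c f (single i \<beta>) k (S - T k \<union> S') \<le> agent_util T c f (single i \<beta>) k S"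
    proof (cases "k = i")
      case True
      have e1: "S - T k \<union> S' = S'" using ST S' True by auto
      have e2: "S' \<inter> T k = S'" "S \<inter> T k = S" using ST S' True by auto
      show ?thesis unfolding agent_util_def e1 e2 using br S' True unfolding BR_def single_def by auto
    next
      case False
      have e: "S \<inter> T k = {}" using ST disj k i False by auto
      have e2: "(S - T k \<union> S') \<inter> T k = S'" using S' by auto
      have "0 \<le> cost c S'" using S' Tsub[OF k] by (intro cost_nn) auto
      then show ?thesis unfolding agent_util_def e e2 single_def using False by (simp add: cost_def)
    qed
  qed
qed


lemma NE_dev:
  assumes ne: "is_NE Ag T c f a S0" and i: "i \<in> Ag" and S: "S \<subseteq> T i"
  shows "a i * f (S0 - T i \<union> S) - cost c S \<le> a i * f S0 - cost c (S0 \<inter> T i)"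
proof -
  have "agent_util T c f a i (S0 - T i \<union> S) \<le> agent_util T c f a i S0"
    using ne i S unfolding is_NE_def by blast
  moreover have "(S0 - T i \<union> S) \<inter> T i = S" using S by auto
  ultimately show ?thesis unfolding agent_util_def by simp
qed

lemma split_sub:
  assumes ne: "is_NE Ag T c f a S0" 
  shows "f S0 \<le> f (S0 \<inter> T i) + f (S0 - T i)"
proof -
  have "S0 \<subseteq> U" using ne unfolding is_NE_def by auto
  moreover have "S0 = (S0 \<inter> T i) \<union> (S0 - T i)" by auto
  ultimately show ?thesis using fsub[of "S0 \<inter> T i" "S0 - T i"] by auto
qed

lemma L1:
  assumes ne: "is_NE Ag T c f a S0" and ct: "is_contract Ag a" and i: "i \<in> Ag"
    and ai: "a i \<le> 1/2" and br: "BR i (3/4) S"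
  shows "f (S0 \<inter> T i) / 12 \<le> (1 - 3/4) * f S"
proof -
  have S0U: "S0 \<subseteq> U" using ne unfolding is_NE_def by auto
  have a0: "0 \<le> a i" using ct i unfolding is_contract_def by auto
  define v where "v = f (S0 \<inter> T i)"
  define w where "w = f (S0 - T i)"
  define ci where "ci = cost c (S0 \<inter> T i)"
  have d: "a i * w - 0 \<le> a i * f S0 - ci"
    using NE_dev[OF ne i, of "{}"] unfolding w_def ci_def by (simp add: cost_def)
  have sb: "f S0 \<le> v + w" using split_sub[OF ne] unfolding v_def w_def by auto
  have "a i * f S0 \<le> a i * (v + w)" using sb a0 by (intro mult_left_mono)
  hence ci: "ci \<le> a i * v" using d by (simp add: algebra_simps)
  have ST: "S \<subseteq> T i" using br unfolding BR_def by auto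
  have "3/4 * v - ci \<le> 3/4 * f S - cost c S" using br unfolding BR_def v_def ci_def by auto
  moreover have "0 \<le> cost c S" using ST Tsub[OF i] by (intro cost_nn) auto
  moreover have "0 \<le> v" unfolding v_def using S0U by (intro fnn) auto
  moreover have "a i * v \<le> 1/2 * v" using ai \<open>0 \<le> v\<close> by (intro mult_right_mono)
  ultimately have "v / 12 \<le> 1/4 * f S" using ci by linarith
  thus ?thesis unfolding v_def by simp
qed

lemma L2:
  assumes ne: "is_NE Ag T c f a S0" and ct: "is_contract Ag a" and i: "i \<in> Ag"
    and br: "BR i ((1 + a i)/2) S"
  shows "(1 - a i) * f S0 / 2 - f (S0 - T i) \<le> (1 - (1 + a i)/2) * f S"
proof -
  have S0U: "S0 \<subseteq> U" using ne unfolding is_NE_def by auto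
  have a0: "0 \<le> a i" "a i \<le> 1" using ct i unfolding is_contract_def by auto
  define v where "v = f (S0 \<inter> T i)"
  define w where "w = f (S0 - T i)"
  define ci where "ci = cost c (S0 \<inter> T i)"
  define b where "b = (1 + a i)/2"
  have ST: "S \<subseteq> T i" using br unfolding BR_def by auto
  have d: "a i * f (S0 - T i \<union> S) - cost c S \<le> a i * f S0 - ci"
    using NE_dev[OF ne i ST] unfolding ci_def by simp
  have "f S \<le> f (S0 - T i \<union> S)" using S0U ST Tsub[OF i] by (intro fmono) auto
  hence d2: "a i * f S - cost c S \<le> a i * f S0 - ci" using d a0 mult_left_mono by fastforce
  have brr: "b * v - ci \<le> b * f S - cost c S" using br unfolding BR_def v_def ci_def b_def by auto
  have sb: "f S0 \<le> v + w" using split_sub[OF ne] unfolding v_def w_def by auto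
  have b0: "0 \<le> b" "b \<le> 1" unfolding b_def using a0 by auto
  have "b * f S0 \<le> b * (v + w)" using sb b0 by (intro mult_left_mono)
  moreover have "0 \<le> w" unfolding w_def using S0U by (intro fnn) auto
  moreover have "b * w \<le> 1 * w" using b0 \<open>0 \<le> w\<close> by (intro mult_right_mono)
  ultimately have key: "b * f S0 - w \<le> b * v" by (simp add: algebra_simps)
  have X: "(b - a i) * f S0 - w \<le> (b - a i) * f S" using key d2 brr by (simp add: algebra_simps)
  have e: "b - a i = 1 - b" unfolding b_def by (simp add: field_simps)
  have e2: "(1 - a i) * f S0 / 2 = (1 - b) * f S0" unfolding b_def by (simp add: field_simps)
  show ?thesis using X unfolding e e2 b_def[symmetric] w_def[symmetric] by simp
qed


lemma decomp_all: "S0 \<subseteq> U \<Longrightarrow> S0 = (\<Union>j\<in>Ag. S0 \<inter> T j)"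
  unfolding all_actions_def by auto

lemma decomp_minus: "S0 \<subseteq> U \<Longrightarrow> i \<in> Ag \<Longrightarrow> S0 - T i = (\<Union>j\<in>Ag - {i}. S0 \<inter> T j)"
  unfolding all_actions_def using disj by blast

lemma main:
  assumes ne: "is_NE Ag T c f a S0" and ct: "is_contract Ag a"
    and P: "0 < principal_util Ag f a S0"
  shows "\<exists>i \<beta> S. i \<in> Ag \<and> 0 \<le> \<beta> \<and> \<beta> \<le> 1 \<and> BR i \<beta> S \<and>
           principal_util Ag f a S0 / (48 * real (card Ag)) \<le> (1 - \<beta>) * f S"
proof -
  define A where "A = sum a Ag"
  define F where "F = f S0"
  define p where "p = principal_util Ag f a S0"
  define n where "n = real (card Ag)"
  define v where "v = (\<lambda>j. f (S0 \<inter> T j))"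
  have S0U: "S0 \<subseteq> U" using ne unfolding is_NE_def by auto
  have pdef: "p = (1 - A) * F" unfolding p_def principal_util_def A_def F_def ..
  have F0: "0 \<le> F" unfolding F_def using S0U by (rule fnn)
  have anb: "\<And>j. j \<in> Ag \<Longrightarrow> 0 \<le> a j \<and> a j \<le> 1" using ct unfolding is_contract_def by auto
  have A0: "0 \<le> A" unfolding A_def using anb by (intro sum_nonneg) auto
  have p0: "0 < p" using P p_def by simp
  have Fpos: "0 < F" and A1: "A < 1"
  proof -
    show "0 < F" using p0 pdef F0 by (cases "F = 0") auto
    show "A < 1"
    proof (rule ccontr)
      assume "\<not> A < 1" hence "1 - A \<le> 0" by simp
      hence "(1 - A) * F \<le> 0" using F0 by (simp add: mult_nonpos_nonneg)
      thus False using p0 pdef by simp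
    qed
  qed
  have pF: "p \<le> F" unfolding pdef using mult_right_mono[of "1 - A" 1 F] A0 F0 by simp
  have n1: "1 \<le> n" unfolding n_def using fin nonempty by (simp add: Suc_leI card_gt_0_iff)
  have v0: "\<And>j. 0 \<le> v j" unfolding v_def using S0U by (intro fnn) auto
  have vU: "\<forall>j\<in>Ag. S0 \<inter> T j \<subseteq> U" using S0U by auto
  have goal_form: "p / (48 * n) \<le> (1 - 3/4) * f S"
    if "p \<le> 4 * n * v j" "v j / 12 \<le> (1 - 3/4) * f S" for j S
  proof -
    have "p / (48 * n) \<le> 4 * n * v j / (48 * n)" using that(1) n1 by (intro divide_right_mono) auto
    also have "\<dots> = v j / 12" using n1 by (simp add: field_simps)
    finally show ?thesis using that(2) by linarith
  qed
  show ?thesis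
  proof (cases "\<exists>i\<in>Ag. a i > 1/2")
    case True
    then obtain i where i: "i \<in> Ag" "a i > 1/2" by auto
    have Asplit: "A = a i + sum a (Ag - {i})" unfolding A_def using fin i(1) by (simp add: sum.remove)
    have small: "\<And>j. j \<in> Ag - {i} \<Longrightarrow> a j \<le> 1/2"
    proof -
      fix j assume j: "j \<in> Ag - {i}"
      have "a j \<le> sum a (Ag - {i})" using j fin anb by (intro member_le_sum) auto
      thus "a j \<le> 1/2" using Asplit A1 i by linarith
    qed
    have pa: "p \<le> (1 - a i) * F" unfolding pdef using Asplit F0 A0
      by (intro mult_right_mono) (auto simp: A_def intro!: sum_nonneg dest: anb)
    define w where "w = f (S0 - T i)"
    show ?thesis
    proof (cases "w \<le> (1 - a i) * F / 4")
      case True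
      obtain S where S: "BR i ((1 + a i)/2) S" using BR_ex[OF i(1)] by blast
      have l2: "(1 - a i) * F / 2 - w \<le> (1 - (1 + a i)/2) * f S"
        using L2[OF ne ct i(1) S] unfolding F_def w_def .
      have "p / (48 * n) \<le> p / 4" using p0 n1 by (intro divide_left_mono) auto
      hence "p / (48 * n) \<le> (1 - (1 + a i)/2) * f S" using l2 True pa by linarith
      moreover have "0 \<le> (1 + a i)/2" "(1 + a i)/2 \<le> 1" using anb[OF i(1)] by auto
      ultimately show ?thesis using S i(1) unfolding p_def n_def by blast
    next
      case False
      have "w \<le> (\<Sum>j\<in>Ag - {i}. v j)" unfolding w_def v_def
        using decomp_minus[OF S0U i(1)] fsub_UN[of "Ag - {i}" "\<lambda>j. S0 \<inter> T j"] fin vU by auto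
      moreover have wpos: "0 < w"
      proof -
        have "0 \<le> (1 - a i) * F" using anb[OF i(1)] F0 by simp
        thus ?thesis using False by linarith
      qed
      ultimately have "Ag - {i} \<noteq> {}"
      proof (intro notI)
        assume "w \<le> (\<Sum>j\<in>Ag - {i}. v j)" "0 < w" "Ag - {i} = {}"
        thus False by simp
      qed
      then obtain j where j: "j \<in> Ag - {i}" "(\<Sum>j\<in>Ag - {i}. v j) \<le> real (card (Ag - {i})) * v j"
        using exists_big[of "Ag - {i}" v] fin by auto
      have "real (card (Ag - {i})) * v j \<le> n * v j" unfolding n_def using v0 fin
        by (intro mult_right_mono) (auto simp: card_Diff1_le)
      hence wn: "w \<le> n * v j" using j \<open>w \<le> _\<close> by linarith
      obtain S where S: "BR j (3/4) S" using BR_ex j by blast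
      have l1: "v j / 12 \<le> (1 - 3/4) * f S" using L1[OF ne ct _ small[OF j(1)] S] j unfolding v_def by auto
      have "p \<le> 4 * n * v j" using pa False wn by linarith
      hence "p / (48 * n) \<le> (1 - 3/4) * f S" using goal_form l1 by blast
      thus ?thesis using S j unfolding p_def n_def
        by (intro exI[of _ j] exI[of _ "3/4"] exI[of _ S]) auto
    qed
  next
    case False
    hence small: "\<And>j. j \<in> Ag \<Longrightarrow> a j \<le> 1/2" by auto
    have "F \<le> (\<Sum>j\<in>Ag. v j)" unfolding F_def v_def
      using decomp_all[OF S0U] fsub_UN[of Ag "\<lambda>j. S0 \<inter> T j"] fin vU by auto
    then obtain j where j: "j \<in> Ag" "F \<le> n * v j"
      using exists_big[of Ag v] fin nonempty unfolding n_def by fastforce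
    obtain S where S: "BR j (3/4) S" using BR_ex j by blast
    have l1: "v j / 12 \<le> (1 - 3/4) * f S" using L1[OF ne ct j(1) small[OF j(1)] S] unfolding v_def by auto
    have "0 \<le> n * v j" using n1 v0[of j] by simp
    hence "p \<le> 4 * n * v j" using pF j by linarith
    hence "p / (48 * n) \<le> (1 - 3/4) * f S" using goal_form l1 by blast
    thus ?thesis using S j unfolding p_def n_def
      by (intro exI[of _ j] exI[of _ "3/4"] exI[of _ S]) auto
  qed
qed


lemma max_single:
  "\<exists>i0 b0 S0. i0 \<in> Ag \<and> 0 \<le> b0 \<and> b0 \<le> 1 \<and> BR i0 b0 S0 \<and>
     (\<forall>i \<beta> S. i \<in> Ag \<and> 0 \<le> \<beta> \<and> \<beta> \<le> 1 \<and> BR i \<beta> S \<longrightarrow> (1 - \<beta>) * f S \<le> (1 - b0) * f S0)"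
proof -
  define B where "B = (\<lambda>i S. {\<beta>\<in>{0..1}. BR i \<beta> S})"
  define PP where "PP = {(i, S). i \<in> Ag \<and> S \<subseteq> T i \<and> B i S \<noteq> {}}"
  have "PP \<subseteq> Sigma Ag (\<lambda>i. Pow (T i))" unfolding PP_def by auto
  moreover have "finite (Sigma Ag (\<lambda>i. Pow (T i)))" using fin finT by (intro finite_SigmaI) auto
  ultimately have finPP: "finite PP" by (rule finite_subset)
  obtain i1 where i1: "i1 \<in> Ag" using nonempty by auto
  obtain S1 where S1: "BR i1 0 S1" using BR_ex[OF i1] by blast
  have "0 \<in> B i1 S1" unfolding B_def using S1 by auto
  moreover have "S1 \<subseteq> T i1" using S1 unfolding BR_def by auto
  ultimately have "(i1, S1) \<in> PP" unfolding PP_def using i1 by auto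
  hence neP: "PP \<noteq> {}" by auto
  have closedB: "closed (B i S)" if "S \<subseteq> T i" for i S
  proof -
    have "B i S = {0..1} \<inter> (\<Inter>S'\<in>Pow (T i). {\<beta>. \<beta> * f S' - cost c S' \<le> \<beta> * f S - cost c S})"
      unfolding B_def BR_def using that by auto
    moreover have "closed {\<beta>::real. \<beta> * f S' - cost c S' \<le> \<beta> * f S - cost c S}" for S'
      by (intro closed_Collect_le continuous_intros)
    ultimately show ?thesis by (auto intro!: closed_Int closed_INT)
  qed
  have InfB: "Inf (B i S) \<in> B i S" if "(i, S) \<in> PP" for i S
  proof (rule closed_contains_Inf)
    show "B i S \<noteq> {}" using that unfolding PP_def by auto
    show "bdd_below (B i S)" unfolding B_def by (rule bdd_belowI[of _ 0]) auto
    show "closed (B i S)" using that closedB unfolding PP_def by auto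
  qed
  define g where "g = (\<lambda>p. (1 - Inf (B (fst p) (snd p))) * f (snd p))"
  obtain p0 where p0: "p0 \<in> PP" "\<forall>p\<in>PP. g p \<le> g p0" using ex_max[OF finPP neP, of g] by blast
  obtain i0 S0 where ps: "p0 = (i0, S0)" by (cases p0) auto
  define b0 where "b0 = Inf (B i0 S0)"
  have b0B: "b0 \<in> B i0 S0" using InfB p0(1) ps unfolding b0_def by auto
  have i0: "i0 \<in> Ag" using p0(1) ps unfolding PP_def by auto
  show ?thesis
  proof (intro exI conjI allI impI)
    show "i0 \<in> Ag" by (rule i0)
    show "0 \<le> b0" "b0 \<le> 1" "BR i0 b0 S0" using b0B unfolding B_def by auto
    fix i \<beta> S assume a: "i \<in> Ag \<and> 0 \<le> \<beta> \<and> \<beta> \<le> 1 \<and> BR i \<beta> S"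
    have ST: "S \<subseteq> T i" using a unfolding BR_def by auto
    have bB: "\<beta> \<in> B i S" using a unfolding B_def by auto
    hence inP: "(i, S) \<in> PP" unfolding PP_def using a ST by auto
    have "Inf (B i S) \<le> \<beta>" using bB by (intro cInf_lower) (auto simp: B_def intro!: bdd_belowI[of _ 0])
    moreover have "0 \<le> f S" using ST Tsub a by (intro fnn) auto
    ultimately have "(1 - \<beta>) * f S \<le> g (i, S)" unfolding g_def by (simp add: mult_right_mono)
    also have "\<dots> \<le> g p0" using p0(2) inP by blast
    also have "\<dots> = (1 - b0) * f S0" unfolding g_def ps b0_def by simp
    finally show "(1 - \<beta>) * f S \<le> (1 - b0) * f S0" .
  qed
qed

end

theorem theoremC1:
  "\<exists>C::real. C > 0 \<and>
    (\<forall>(Ag::nat set) (T::nat \<Rightarrow> nat set) (c::nat \<Rightarrow> real) (f::nat set \<Rightarrow> real).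
      finite Ag \<and> Ag \<noteq> {} \<and>
      (\<forall>i\<in>Ag. finite (T i)) \<and>
      (\<forall>i\<in>Ag. \<forall>k\<in>Ag. i \<noteq> k \<longrightarrow> T i \<inter> T k = {}) \<and>
      (\<forall>j\<in>all_actions Ag T. 0 \<le> c j) \<and>
      valid_reward (all_actions Ag T) f \<and>
      subadditive_on (all_actions Ag T) f
      \<longrightarrow>
      (\<exists>\<alpha> S. is_contract Ag \<alpha> \<and> card {i\<in>Ag. \<alpha> i \<noteq> 0} \<le> 1 \<and>
             is_NE Ag T c f \<alpha> S \<and>
             (\<forall>\<alpha>' S'. is_contract Ag \<alpha>' \<and> is_NE Ag T c f \<alpha>' S' \<longrightarrow>
                principal_util Ag f \<alpha> S \<ge> C / real (card Ag) * principal_util Ag f \<alpha>' S')))"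
proof (intro exI[of _ "1/48"] conjI allI impI)
  show "(0::real) < 1/48" by simp
  fix Ag :: "nat set" and T :: "nat \<Rightarrow> nat set" and c :: "nat \<Rightarrow> real" and f :: "nat set \<Rightarrow> real"
  assume h: "finite Ag \<and> Ag \<noteq> {} \<and>
      (\<forall>i\<in>Ag. finite (T i)) \<and>
      (\<forall>i\<in>Ag. \<forall>k\<in>Ag. i \<noteq> k \<longrightarrow> T i \<inter> T k = {}) \<and>
      (\<forall>j\<in>all_actions Ag T. 0 \<le> (c::nat \<Rightarrow> real) j) \<and>
      valid_reward (all_actions Ag T) (f::nat set \<Rightarrow> real) \<and>
      subadditive_on (all_actions Ag T) f"
  interpret setting Ag T c f using h by unfold_locales auto
  obtain i0 b0 S0 where m: "i0 \<in> Ag" "0 \<le> b0" "b0 \<le> 1" "BR i0 b0 S0"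
    "\<forall>i \<beta> S. i \<in> Ag \<and> 0 \<le> \<beta> \<and> \<beta> \<le> 1 \<and> BR i \<beta> S \<longrightarrow> (1 - \<beta>) * f S \<le> (1 - b0) * f S0"
    using max_single by blast
  note so = single_ok[OF m(1-4)]
  have S0T: "S0 \<subseteq> T i0" using m(4) unfolding BR_def by auto
  have nn: "0 \<le> (1 - b0) * f S0" using m(3) S0T Tsub[OF m(1)] fnn by (intro mult_nonneg_nonneg) auto
  show "\<exists>\<alpha> S. is_contract Ag \<alpha> \<and> card {i\<in>Ag. \<alpha> i \<noteq> 0} \<le> 1 \<and>
             is_NE Ag T c f \<alpha> S \<and>
             (\<forall>\<alpha>' S'. is_contract Ag \<alpha>' \<and> is_NE Ag T c f \<alpha>' S' \<longrightarrow>
                principal_util Ag f \<alpha> S \<ge> 1/48 / real (card Ag) * principal_util Ag f \<alpha>' S')"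
  proof (intro exI[of _ "single i0 b0"] exI[of _ S0] conjI allI impI)
    show "is_contract Ag (single i0 b0)" "card {i\<in>Ag. single i0 b0 i \<noteq> 0} \<le> 1"
      "is_NE Ag T c f (single i0 b0) S0" using so by auto
    fix a S' assume a: "is_contract Ag a \<and> is_NE Ag T c f a S'"
    have n0: "0 < real (card Ag)" using fin nonempty by (simp add: card_gt_0_iff)
    show "1/48 / real (card Ag) * principal_util Ag f a S' \<le> principal_util Ag f (single i0 b0) S0"
    proof (cases "0 < principal_util Ag f a S'")
      case True
      obtain i \<beta> S where x: "i \<in> Ag" "0 \<le> \<beta>" "\<beta> \<le> 1" "BR i \<beta> S"
        "principal_util Ag f a S' / (48 * real (card Ag)) \<le> (1 - \<beta>) * f S"
        using main[of a S'] a True by blast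
      have "(1 - \<beta>) * f S \<le> (1 - b0) * f S0" using m(5) x by blast
      thus ?thesis using x(5) so(4) by simp
    next
      case False
      hence "1/48 / real (card Ag) * principal_util Ag f a S' \<le> 0" using n0
        by (intro mult_nonneg_nonpos) auto
      thus ?thesis using so(4) nn by simp
    qed
  qed
qed

end
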